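(* For any complete chain $\mathbf{C}$, the pointed residuated lattice $\mathbf{Res}(\mathbf{C})=\langle \mathrm{Res}(\mathbf{C}),\wedge,\vee,\circ,\backslash,/,\mathrm{id},p\rangle$ is simple, i.e., its only congruences are the identity relation and the total relation.
   Context: Let $\mathbf{C}$ be a complete chain with least element $0$ and greatest element $\infty$. $\mathrm{Res}(\mathbf{C})$ is the set of maps $C\to C$ preserving arbitrary joins, with pointwise $\wedge,\vee$, composition $\circ$, identity map $\mathrm{id}$, residuals $f\backslash g=\bigvee\{h\mid f\circ h\le g\}$ and $g/f=\bigvee\{h\mid h\circ f\le g\}$, and the constant $p\colon x\mapsto\bigvee\{y\in C\mid y<x\}$. *)

theory Defs
  imports Main
begin

text \<open>A complete chain is modelled by a type of class complete_linorder
  (least element bot = 0, greatest element top = infinity).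
  Res(C): the join-preserving self-maps of C.\<close>

definition Res :: "('a::complete_linorder \<Rightarrow> 'a) set" where
  "Res = {f. \<forall>A. f (Sup A) = Sup (f ` A)}"

text \<open>Residuals: joins (in Res, which coincide with pointwise joins) of
  the relevant sets of maps in Res.\<close>

definition res_ldiv :: "('a::complete_linorder \<Rightarrow> 'a) \<Rightarrow> ('a \<Rightarrow> 'a) \<Rightarrow> ('a \<Rightarrow> 'a)" where
  "res_ldiv f g = Sup {h \<in> Res. f \<circ> h \<le> g}"

definition res_rdiv :: "('a::complete_linorder \<Rightarrow> 'a) \<Rightarrow> ('a \<Rightarrow> 'a) \<Rightarrow> ('a \<Rightarrow> 'a)" where
  "res_rdiv g f = Sup {h \<in> Res. h \<circ> f \<le> g}"

definition res_p :: "'a::complete_linorder \<Rightarrow> 'a" where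
  "res_p x = Sup {y. y < x}"

text \<open>Congruence of the pointed residuated lattice
  (Res, inf, sup, comp, ldiv, rdiv, id, p): an equivalence relation on Res
  compatible with all operations (the constants id and p impose no condition).\<close>

definition res_congruence :: "(('a::complete_linorder \<Rightarrow> 'a) \<times> ('a \<Rightarrow> 'a)) set \<Rightarrow> bool" where
  "res_congruence \<theta> \<longleftrightarrow>
     equiv Res \<theta> \<and>
     (\<forall>f g f' g'. (f, f') \<in> \<theta> \<longrightarrow> (g, g') \<in> \<theta> \<longrightarrow>
        (inf f g, inf f' g') \<in> \<theta> \<and>
        (sup f g, sup f' g') \<in> \<theta> \<and>
        (f \<circ> g, f' \<circ> g') \<in> \<theta> \<and>
        (res_ldiv f g, res_ldiv f' g') \<in> \<theta> \<and>
        (res_rdiv f g, res_rdiv f' g') \<in> \<theta>)"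

end

theory Submission
  imports Defs
begin

definition estep :: "'a::complete_linorder \<Rightarrow> 'a \<Rightarrow> 'a \<Rightarrow> 'a" where
  "estep u v = (\<lambda>x. if x \<le> u then bot else v)"

lemma estep_Res: "estep u v \<in> Res"
proof -
  have "estep u v (Sup A) = Sup (estep u v ` A)" for A
  proof (cases "\<forall>a\<in>A. a \<le> u")
    case True
    then have "Sup A \<le> u" by (simp add: Sup_le_iff)
    moreover have "estep u v ` A \<subseteq> {bot}" using True by (auto simp: estep_def)
    ultimately show ?thesis by (auto simp: estep_def intro!: antisym Sup_least)
  next
    case False
    then obtain a where a: "a \<in> A" "\<not> a \<le> u" by blast
    then have "\<not> Sup A \<le> u" by (meson Sup_upper order_trans)
    moreover have "Sup (estep u v ` A) = v"
    proof (rule antisym)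
      show "Sup (estep u v ` A) \<le> v" by (rule Sup_least) (auto simp: estep_def)
      have "estep u v a = v" using a by (simp add: estep_def)
      then show "v \<le> Sup (estep u v ` A)" using a by (metis Sup_upper imageI)
    qed
    ultimately show ?thesis by (simp add: estep_def)
  qed
  then show ?thesis by (simp add: Res_def)
qed

lemma Res_bot: "f \<in> Res \<Longrightarrow> f bot = bot"
  unfolding Res_def by (metis (mono_tags, lifting) Sup_empty image_empty mem_Collect_eq)

theorem proposition2p2:
  fixes \<theta> :: "(('a::complete_linorder \<Rightarrow> 'a) \<times> ('a \<Rightarrow> 'a)) set"
  assumes "res_congruence \<theta>"
  shows "\<theta> = Id_on Res \<or> \<theta> = Res \<times> Res"
proof (cases "\<forall>(f,g)\<in>\<theta>. f = g")
  case True
  have eq: "equiv Res \<theta>" using assms by (simp add: res_congruence_def)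
  then have "\<theta> \<subseteq> Res \<times> Res" "\<forall>x\<in>Res. (x,x) \<in> \<theta>"
    by (auto simp: equiv_def refl_on_def)
  then have "\<theta> = Id_on Res" using True by (auto simp: Id_on_def)
  then show ?thesis by simp
next
  case False
  have eq: "equiv Res \<theta>" using assms by (simp add: res_congruence_def)
  have sub: "\<theta> \<subseteq> Res \<times> Res" using eq by (simp add: equiv_def refl_on_def)
  have refl: "\<And>x. x\<in>Res \<Longrightarrow> (x,x) \<in> \<theta>" using eq by (simp add: equiv_def refl_on_def)
  have sy: "\<And>x y. (x,y)\<in>\<theta> \<Longrightarrow> (y,x)\<in>\<theta>" using eq unfolding equiv_def by (meson symD)
  have tr: "\<And>x y z. (x,y)\<in>\<theta> \<Longrightarrow> (y,z)\<in>\<theta> \<Longrightarrow> (x,z)\<in>\<theta>"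
    using eq unfolding equiv_def by (meson transD)
  have comp: "\<And>f g f' g'. (f, f') \<in> \<theta> \<Longrightarrow> (g, g') \<in> \<theta> \<Longrightarrow> (f \<circ> g, f' \<circ> g') \<in> \<theta>"
    and inf: "\<And>f g f' g'. (f, f') \<in> \<theta> \<Longrightarrow> (g, g') \<in> \<theta> \<Longrightarrow> (inf f g, inf f' g') \<in> \<theta>"
    using assms unfolding res_congruence_def by blast+
  obtain f0 g0 where fg0: "(f0,g0) \<in> \<theta>" "f0 \<noteq> g0" using False by auto
  then obtain x1 where "f0 x1 \<noteq> g0 x1" by auto
  obtain f g x0 where fg: "(f,g) \<in> \<theta>" "f x0 < g x0"
  proof (cases "f0 x1 < g0 x1")
    case True
    then show ?thesis using that fg0(1) by blast
  next
    case False
    then have "g0 x1 < f0 x1" using \<open>f0 x1 \<noteq> g0 x1\<close> by simp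
    then show ?thesis using that sy[OF fg0(1)] by blast
  qed
  have fR: "f \<in> Res" and gR: "g \<in> Res" using fg sub by auto
  define k where "k = estep (f x0) (top::'a)"
  define j where "j = estep (bot::'a) x0"
  have "(k \<circ> f \<circ> j, k \<circ> g \<circ> j) \<in> \<theta>"
    using comp[OF comp[OF refl[OF estep_Res] fg(1)] refl[OF estep_Res]]
    by (simp add: k_def j_def)
  moreover have "k \<circ> f \<circ> j = (\<lambda>_. bot)"
    using Res_bot[OF fR] by (auto simp: k_def j_def estep_def)
  moreover have "k \<circ> g \<circ> j = estep bot top"
    using Res_bot[OF gR] fg(2) by (auto simp: k_def j_def estep_def fun_eq_iff)
  ultimately have z: "((\<lambda>_. bot), estep bot top) \<in> \<theta>" by simp
  have zh: "((\<lambda>_. bot), h) \<in> \<theta>" if "h \<in> Res" for h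
  proof -
    have "(inf h (\<lambda>_. bot), inf h (estep bot top)) \<in> \<theta>"
      using inf[OF refl[OF that] z] .
    moreover have "inf h (\<lambda>_. bot) = (\<lambda>_. bot)" by (simp add: fun_eq_iff)
    moreover have "inf h (estep bot top) = h"
      using Res_bot[OF that] by (auto simp: fun_eq_iff estep_def bot_unique)
    ultimately show ?thesis by simp
  qed
  have "Res \<times> Res \<subseteq> \<theta>"
  proof
    fix p :: "(('a \<Rightarrow> 'a) \<times> ('a \<Rightarrow> 'a))" assume "p \<in> Res \<times> Res"
    then obtain a b where "p = (a,b)" "a \<in> Res" "b \<in> Res" by auto
    then show "p \<in> \<theta>" using zh sy tr by blast
  qed
  then show ?thesis using sub by blast
qed

end
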